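(* Let $\mathbb{M}^3$ be Minkowski 3-space with inner product $\langle x,y\rangle_{\mathbb{L}}=-x_1y_1+x_2y_2+x_3y_3$. Let $\sigma=\sigma(u,v)$ be a smooth surface in $\mathbb{M}^3$ and let $\{t,n,b\}$ be smooth pairwise orthogonal vector fields along $\sigma$ with $\langle t,t\rangle_{\mathbb{L}}=-1$, $\langle n,n\rangle_{\mathbb{L}}=1$, $\langle b,b\rangle_{\mathbb{L}}=1$, such that $\sigma_u=t$, $\sigma_v=\lambda b$ for a nowhere-vanishing function $\lambda$, and $$t_u=\kappa n,\qquad n_u=\kappa t-\tau b,\qquad b_u=\tau n$$ for functions $\kappa,\tau$ (so each $u$-curve is a unit-speed timelike geodesic of $\sigma$ with curvature $\kappa$ and torsion $\tau$). Assume there are constants $A,B$ with $B^2>A^2$ and $A\kappa+B\tau=1$, and that $\tau$ vanishes nowhere. Define $$\sigma^*(u,v)=\sigma(u,v)-A\,n(u,v),\qquad t^*=\frac{Bt+Ab}{\sqrt{B^2-A^2}},\qquad b^*=\frac{-At+Bb}{\sqrt{B^2-A^2}},$$ and along each $u$-curve let $u^*$ be a parameter with $du^*/du=\sqrt{B^2-A^2}\,\tau$. Then: (1) $\sigma^*_u=\tau(Bt+Ab)$, so $t^*=\partial\sigma^*/\partial u^*$ is a unit timelike vector, and $n$ is orthogonal to both $\sigma^*_u$ and $\sigma^*_v$; (2) $\|\sigma-\sigma^*\|=\sqrt{|\langle \sigma-\sigma^*,\sigma-\sigma^*\rangle_{\mathbb{L}}|}$ is constant, $\langle\sigma^*-\sigma,b\rangle_{\mathbb{L}}=0$,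 $\langle\sigma^*-\sigma,b^*\rangle_{\mathbb{L}}=0$, and $\langle b,b^*\rangle_{\mathbb{L}}$ is constant; (3) $\partial t^*/\partial u^*=\kappa^* n$ and $\partial b^*/\partial u^*=\tau^* n$, where $$\kappa^*=\frac{B\kappa+A\tau}{(B^2-A^2)\tau},\qquad \tau^*=\frac{B\tau-A\kappa}{(B^2-A^2)\tau}.$$
   Context: A vector $x\in\mathbb{M}^3$ is spacelike if $\langle x,x\rangle_{\mathbb{L}}>0$ or $x=0$, timelike if $\langle x,x\rangle_{\mathbb{L}}<0$. A surface spanned by a one-parameter family of geodesic Bertrand curves with constants $A,B$ ($A\kappa+B\tau=1$) is called a Razzaboni surface; the map $\sigma\mapsto\sigma^*$ satisfying properties (2) is called a Razzaboni transformation and $\sigma^*$ the dual Razzaboni surface. *)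

theory Defs
  imports "HOL-Analysis.Analysis"
begin

definition minner :: "real^3 \<Rightarrow> real^3 \<Rightarrow> real" where
  "minner x y = - (x$1 * y$1) + x$2 * y$2 + x$3 * y$3"

definition mnorm :: "real^3 \<Rightarrow> real" where
  "mnorm x = sqrt \<bar>minner x x\<bar>"

definition sigma_star :: "real \<Rightarrow> (real\<times>real \<Rightarrow> real^3) \<Rightarrow> (real\<times>real \<Rightarrow> real^3) \<Rightarrow> real\<times>real \<Rightarrow> real^3" where
  "sigma_star A \<sigma> n p = \<sigma> p - A *\<^sub>R n p"

definition t_star :: "real \<Rightarrow> real \<Rightarrow> (real\<times>real \<Rightarrow> real^3) \<Rightarrow> (real\<times>real \<Rightarrow> real^3) \<Rightarrow> real\<times>real \<Rightarrow> real^3" where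
  "t_star A B t b p = (1 / sqrt (B\<^sup>2 - A\<^sup>2)) *\<^sub>R (B *\<^sub>R t p + A *\<^sub>R b p)"

definition b_star :: "real \<Rightarrow> real \<Rightarrow> (real\<times>real \<Rightarrow> real^3) \<Rightarrow> (real\<times>real \<Rightarrow> real^3) \<Rightarrow> real\<times>real \<Rightarrow> real^3" where
  "b_star A B t b p = (1 / sqrt (B\<^sup>2 - A\<^sup>2)) *\<^sub>R ((- A) *\<^sub>R t p + B *\<^sub>R b p)"

definition kappa_star :: "real \<Rightarrow> real \<Rightarrow> real \<Rightarrow> real \<Rightarrow> real" where
  "kappa_star A B k tau = (B * k + A * tau) / ((B\<^sup>2 - A\<^sup>2) * tau)"

definition tau_star :: "real \<Rightarrow> real \<Rightarrow> real \<Rightarrow> real \<Rightarrow> real" where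
  "tau_star A B k tau = (B * tau - A * k) / ((B\<^sup>2 - A\<^sup>2) * tau)"

end

theory Submission imports Defs begin
lemma minner_add_left: "minner (a + a') b = minner a b + minner a' b"
  by (simp add: minner_def algebra_simps)
lemma minner_add_right: "minner a (b + b') = minner a b + minner a b'"
  by (simp add: minner_def algebra_simps)
lemma minner_diff_left: "minner (a - a') b = minner a b - minner a' b"
  by (simp add: minner_def algebra_simps)
lemma minner_diff_right: "minner a (b - b') = minner a b - minner a b'"
  by (simp add: minner_def algebra_simps)
lemma minner_scaleR_left: "minner (r *\<^sub>R a) b = r * minner a b"
  by (simp add: minner_def algebra_simps)
lemma minner_scaleR_right: "minner a (r *\<^sub>R b) = r * minner a b"
  by (simp add: minner_def algebra_simps)
lemma minner_sym: "minner a b = minner b a"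
  by (simp add: minner_def algebra_simps)
lemma minner_minus_left: "minner (- a) b = - minner a b"
  by (simp add: minner_def algebra_simps)
lemma minner_minus_right: "minner a (- b) = - minner a b"
  by (simp add: minner_def algebra_simps)
lemmas minner_simps = minner_minus_left minner_minus_right minner_add_left minner_add_right minner_diff_left minner_diff_right
  minner_scaleR_left minner_scaleR_right

lemma hvd_cmul: "(f has_vector_derivative f') F \<Longrightarrow> ((\<lambda>x. c *\<^sub>R f x) has_vector_derivative c *\<^sub>R f') F"
  by (rule bounded_linear.has_vector_derivative[OF bounded_linear_scaleR_right])

lemma bb_minner: "bounded_bilinear minner"
proof
  show "\<exists>K. \<forall>a b. norm (minner a b) \<le> norm a * norm b * K"
  proof (intro exI allI)
    fix a b :: "real^3"
    have h: "\<And>i. \<bar>a$i * b$i\<bar> \<le> norm a * norm b"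
      by (simp add: abs_mult component_le_norm_cart mult_mono)
    have "norm (minner a b) \<le> \<bar>a$1*b$1\<bar> + \<bar>a$2*b$2\<bar> + \<bar>a$3*b$3\<bar>"
      unfolding minner_def by simp
    also have "\<dots> \<le> norm a * norm b * 3" using h[of 1] h[of 2] h[of 3] by simp
    finally show "norm (minner a b) \<le> norm a * norm b * 3" .
  qed
qed (simp_all add: minner_simps)
theorem mainTheorem2:
  fixes U :: "(real \<times> real) set"
    and \<sigma> t n b :: "real \<times> real \<Rightarrow> real^3"
    and lam \<kappa> \<tau> :: "real \<times> real \<Rightarrow> real"
    and A B :: real
  assumes U_open: "open U"
    and smooth: "\<And>p. p \<in> U \<Longrightarrow> \<sigma> differentiable (at p) \<and> t differentiable (at p)
                     \<and> n differentiable (at p) \<and> b differentiable (at p)"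
    and frame: "\<And>p. p \<in> U \<Longrightarrow> minner (t p) (t p) = -1 \<and> minner (n p) (n p) = 1
                     \<and> minner (b p) (b p) = 1 \<and> minner (t p) (n p) = 0
                     \<and> minner (t p) (b p) = 0 \<and> minner (n p) (b p) = 0"
    and sigma_u: "\<And>u v. (u, v) \<in> U \<Longrightarrow> ((\<lambda>s. \<sigma> (s, v)) has_vector_derivative t (u, v)) (at u)"
    and sigma_v: "\<And>u v. (u, v) \<in> U \<Longrightarrow> ((\<lambda>s. \<sigma> (u, s)) has_vector_derivative lam (u, v) *\<^sub>R b (u, v)) (at v)"
    and lam_nz: "\<And>p. p \<in> U \<Longrightarrow> lam p \<noteq> 0"
    and t_u: "\<And>u v. (u, v) \<in> U \<Longrightarrow> ((\<lambda>s. t (s, v)) has_vector_derivative \<kappa> (u, v) *\<^sub>R n (u, v)) (at u)"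
    and n_u: "\<And>u v. (u, v) \<in> U \<Longrightarrow> ((\<lambda>s. n (s, v)) has_vector_derivative
                 \<kappa> (u, v) *\<^sub>R t (u, v) - \<tau> (u, v) *\<^sub>R b (u, v)) (at u)"
    and b_u: "\<And>u v. (u, v) \<in> U \<Longrightarrow> ((\<lambda>s. b (s, v)) has_vector_derivative \<tau> (u, v) *\<^sub>R n (u, v)) (at u)"
    and AB: "B\<^sup>2 > A\<^sup>2"
    and bertrand: "\<And>p. p \<in> U \<Longrightarrow> A * \<kappa> p + B * \<tau> p = 1"
    and tau_nz: "\<And>p. p \<in> U \<Longrightarrow> \<tau> p \<noteq> 0"
  shows
    "(\<forall>u v. (u, v) \<in> U \<longrightarrow>
        ((\<lambda>s. sigma_star A \<sigma> n (s, v)) has_vector_derivative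
            \<tau> (u, v) *\<^sub>R (B *\<^sub>R t (u, v) + A *\<^sub>R b (u, v))) (at u)
      \<and> ((\<lambda>s. sigma_star A \<sigma> n (s, v)) has_vector_derivative
            (sqrt (B\<^sup>2 - A\<^sup>2) * \<tau> (u, v)) *\<^sub>R t_star A B t b (u, v)) (at u)
      \<and> minner (t_star A B t b (u, v)) (t_star A B t b (u, v)) = -1
      \<and> minner (n (u, v)) (\<tau> (u, v) *\<^sub>R (B *\<^sub>R t (u, v) + A *\<^sub>R b (u, v))) = 0
      \<and> (\<exists>d. ((\<lambda>s. sigma_star A \<sigma> n (u, s)) has_vector_derivative d) (at v)
             \<and> minner (n (u, v)) d = 0))
   \<and> (\<exists>c. \<forall>p\<in>U. mnorm (\<sigma> p - sigma_star A \<sigma> n p) = c)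
   \<and> (\<forall>p\<in>U. minner (sigma_star A \<sigma> n p - \<sigma> p) (b p) = 0)
   \<and> (\<forall>p\<in>U. minner (sigma_star A \<sigma> n p - \<sigma> p) (b_star A B t b p) = 0)
   \<and> (\<exists>c. \<forall>p\<in>U. minner (b p) (b_star A B t b p) = c)
   \<and> (\<forall>u v. (u, v) \<in> U \<longrightarrow>
        ((\<lambda>s. t_star A B t b (s, v)) has_vector_derivative
            (sqrt (B\<^sup>2 - A\<^sup>2) * \<tau> (u, v)) *\<^sub>R (kappa_star A B (\<kappa> (u, v)) (\<tau> (u, v)) *\<^sub>R n (u, v))) (at u)
      \<and> ((\<lambda>s. b_star A B t b (s, v)) has_vector_derivative
            (sqrt (B\<^sup>2 - A\<^sup>2) * \<tau> (u, v)) *\<^sub>R (tau_star A B (\<kappa> (u, v)) (\<tau> (u, v)) *\<^sub>R n (u, v))) (at u))"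
proof -
  define sq where "sq = sqrt (B\<^sup>2 - A\<^sup>2)"
  have sqpos: "sq > 0" using AB by (simp add: sq_def)
  have sq2: "sq^2 = B\<^sup>2 - A\<^sup>2" using AB by (simp add: sq_def)
  have P1: "((\<lambda>s. sigma_star A \<sigma> n (s, v)) has_vector_derivative
            \<tau> (u, v) *\<^sub>R (B *\<^sub>R t (u, v) + A *\<^sub>R b (u, v))) (at u)" if uv: "(u,v) \<in> U" for u v
  proof -
    have "((\<lambda>s. sigma_star A \<sigma> n (s, v)) has_vector_derivative
            t (u,v) - A *\<^sub>R (\<kappa> (u, v) *\<^sub>R t (u, v) - \<tau> (u, v) *\<^sub>R b (u, v))) (at u)"
      unfolding sigma_star_def by (intro derivative_intros hvd_cmul sigma_u n_u uv)
    moreover have "t (u,v) - A *\<^sub>R (\<kappa> (u, v) *\<^sub>R t (u, v) - \<tau> (u, v) *\<^sub>R b (u, v))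
       = \<tau> (u, v) *\<^sub>R (B *\<^sub>R t (u, v) + A *\<^sub>R b (u, v))"
    proof -
      have "1 - A * \<kappa> (u,v) = B * \<tau> (u,v)" using bertrand[OF uv] by simp
      hence "t (u,v) - A *\<^sub>R (\<kappa> (u, v) *\<^sub>R t (u, v) - \<tau> (u, v) *\<^sub>R b (u, v))
          = (1 - A * \<kappa> (u,v)) *\<^sub>R t (u,v) + (A * \<tau> (u,v)) *\<^sub>R b (u,v)"
        by (simp add: algebra_simps)
      also have "\<dots> = \<tau> (u, v) *\<^sub>R (B *\<^sub>R t (u, v) + A *\<^sub>R b (u, v))"
        by (simp only: \<open>1 - A * \<kappa> (u,v) = B * \<tau> (u,v)\<close>) (simp add: algebra_simps)
      finally show ?thesis .
    qed
    ultimately show ?thesis by simp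
  qed
  have P2: "minner (t_star A B t b (u, v)) (t_star A B t b (u, v)) = -1" if uv: "(u,v) \<in> U" for u v
  proof -
    have "minner (t_star A B t b (u, v)) (t_star A B t b (u, v))
        = (1/sq)^2 * (B^2 * minner (t (u,v)) (t (u,v)) + 2*A*B* minner (t (u,v)) (b (u,v))
            + A^2 * minner (b (u,v)) (b (u,v)))"
      unfolding t_star_def sq_def[symmetric]
      by (simp add: minner_simps minner_sym[of "b (u,v)" "t (u,v)"] power2_eq_square algebra_simps)
    also have "\<dots> = (A^2 - B^2) / sq^2" using frame[OF uv] by (simp add: power_divide)
    also have "\<dots> = -1"
    proof -
      have "A^2 - B^2 = - (B^2 - A^2)" by simp
      moreover have "B^2 - A^2 \<noteq> 0" using AB by simp
      ultimately show ?thesis unfolding sq2 by (simp add: divide_eq_eq)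
    qed
    finally show ?thesis .
  qed
  have P3: "\<exists>d. ((\<lambda>s. sigma_star A \<sigma> n (u, s)) has_vector_derivative d) (at v)
             \<and> minner (n (u, v)) d = 0" if uv: "(u,v) \<in> U" for u v
  proof -
    have "(\<lambda>s. n (u,s)) = n \<circ> (\<lambda>s. (u,s))" by auto
    moreover have "(n \<circ> (\<lambda>s. (u,s))) differentiable (at v)"
      by (rule differentiable_chain_at) (use smooth[OF uv] in \<open>auto intro!: derivative_intros\<close>)
    ultimately have "(\<lambda>s. n (u,s)) differentiable (at v)" by simp
    then obtain Dn where Dn: "((\<lambda>s. n (u,s)) has_vector_derivative Dn) (at v)"
      using vector_derivative_works by blast
    have D1: "((\<lambda>s. minner (n (u,s)) (n (u,s))) has_vector_derivative
        (minner (n (u,v)) Dn + minner Dn (n (u,v)))) (at v)"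
      using bounded_bilinear.has_vector_derivative[OF bb_minner Dn Dn] .
    obtain e where e: "e > 0" "ball (u,v) e \<subseteq> U" using U_open uv open_contains_ball by blast
    have "((\<lambda>s. 1::real) has_vector_derivative 0) (at v)" by (rule derivative_intros)
    hence D0: "((\<lambda>s. minner (n (u,s)) (n (u,s))) has_vector_derivative 0) (at v)"
    proof (rule has_vector_derivative_transform_within_open[where S="ball v e"])
      fix y assume "y \<in> ball v e"
      hence "(u,y) \<in> U" using e by (auto simp: dist_Pair_Pair dist_commute)
      thus "1 = minner (n (u,y)) (n (u,y))" using frame by simp
    qed (use e in auto)
    have "minner (n (u,v)) Dn + minner Dn (n (u,v)) = 0"
      using vector_derivative_unique_at[OF D1 D0] .
    hence z: "minner (n (u,v)) Dn = 0" by (simp add: minner_sym[of Dn])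
    have "((\<lambda>s. sigma_star A \<sigma> n (u, s)) has_vector_derivative
          lam (u,v) *\<^sub>R b (u,v) - A *\<^sub>R Dn) (at v)"
      unfolding sigma_star_def by (intro derivative_intros hvd_cmul sigma_v Dn uv)
    moreover have "minner (n (u, v)) (lam (u,v) *\<^sub>R b (u,v) - A *\<^sub>R Dn) = 0"
      using z frame[OF uv] by (simp add: minner_simps)
    ultimately show ?thesis by blast
  qed
  have P4: "((\<lambda>s. t_star A B t b (s, v)) has_vector_derivative
            (sqrt (B\<^sup>2 - A\<^sup>2) * \<tau> (u, v)) *\<^sub>R (kappa_star A B (\<kappa> (u, v)) (\<tau> (u, v)) *\<^sub>R n (u, v))) (at u)
      \<and> ((\<lambda>s. b_star A B t b (s, v)) has_vector_derivative
            (sqrt (B\<^sup>2 - A\<^sup>2) * \<tau> (u, v)) *\<^sub>R (tau_star A B (\<kappa> (u, v)) (\<tau> (u, v)) *\<^sub>R n (u, v))) (at u)"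
    if uv: "(u,v) \<in> U" for u v
  proof -
    have tz: "\<tau> (u,v) \<noteq> 0" using tau_nz uv by simp
    have a: "((\<lambda>s. t_star A B t b (s, v)) has_vector_derivative
       (1/sq) *\<^sub>R (B *\<^sub>R (\<kappa> (u, v) *\<^sub>R n (u, v)) + A *\<^sub>R (\<tau> (u, v) *\<^sub>R n (u, v)))) (at u)"
      unfolding t_star_def sq_def[symmetric] by (intro derivative_intros hvd_cmul t_u b_u uv)
    have b: "((\<lambda>s. b_star A B t b (s, v)) has_vector_derivative
       (1/sq) *\<^sub>R ((-A) *\<^sub>R (\<kappa> (u, v) *\<^sub>R n (u, v)) + B *\<^sub>R (\<tau> (u, v) *\<^sub>R n (u, v)))) (at u)"
      unfolding b_star_def sq_def[symmetric] by (intro derivative_intros hvd_cmul t_u b_u uv)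
    have ea: "(1/sq) *\<^sub>R (B *\<^sub>R (\<kappa> (u, v) *\<^sub>R n (u, v)) + A *\<^sub>R (\<tau> (u, v) *\<^sub>R n (u, v)))
      = (sq * \<tau> (u, v)) *\<^sub>R (kappa_star A B (\<kappa> (u, v)) (\<tau> (u, v)) *\<^sub>R n (u, v))"
    proof -
      have "(1/sq) * (B * \<kappa> (u,v) + A * \<tau> (u,v)) = (sq * \<tau> (u, v)) * kappa_star A B (\<kappa> (u, v)) (\<tau> (u, v))"
        unfolding kappa_star_def sq2[symmetric] using tz sqpos
        by (simp add: power2_eq_square)
      hence "(1/sq * (B * \<kappa> (u,v) + A * \<tau> (u,v))) *\<^sub>R n (u,v) = ((sq * \<tau> (u, v)) * kappa_star A B (\<kappa> (u, v)) (\<tau> (u, v))) *\<^sub>R n (u,v)" by simp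
      thus ?thesis by (simp only: scaleR_scaleR flip: scaleR_add_left)
    qed
    have eb: "(1/sq) *\<^sub>R ((-A) *\<^sub>R (\<kappa> (u, v) *\<^sub>R n (u, v)) + B *\<^sub>R (\<tau> (u, v) *\<^sub>R n (u, v)))
      = (sq * \<tau> (u, v)) *\<^sub>R (tau_star A B (\<kappa> (u, v)) (\<tau> (u, v)) *\<^sub>R n (u, v))"
    proof -
      have "(1/sq) * (-A * \<kappa> (u,v) + B * \<tau> (u,v)) = (sq * \<tau> (u, v)) * tau_star A B (\<kappa> (u, v)) (\<tau> (u, v))"
        unfolding tau_star_def sq2[symmetric] using tz sqpos
        by (simp add: power2_eq_square)
      hence "(1/sq * (-A * \<kappa> (u,v) + B * \<tau> (u,v))) *\<^sub>R n (u,v) = ((sq * \<tau> (u, v)) * tau_star A B (\<kappa> (u, v)) (\<tau> (u, v))) *\<^sub>R n (u,v)" by simp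
      thus ?thesis by (simp only: scaleR_scaleR flip: scaleR_add_left)
    qed
    show ?thesis using a b ea eb by (simp add: sq_def)
  qed
  show ?thesis
  proof (intro conjI allI impI ballI)
    fix u v assume uv: "(u,v) \<in> U"
    show "((\<lambda>s. sigma_star A \<sigma> n (s, v)) has_vector_derivative
            \<tau> (u, v) *\<^sub>R (B *\<^sub>R t (u, v) + A *\<^sub>R b (u, v))) (at u)" by (rule P1[OF uv])
    show "((\<lambda>s. sigma_star A \<sigma> n (s, v)) has_vector_derivative
            (sqrt (B\<^sup>2 - A\<^sup>2) * \<tau> (u, v)) *\<^sub>R t_star A B t b (u, v)) (at u)"
      using P1[OF uv] sqpos unfolding t_star_def sq_def[symmetric] by simp
    show "minner (t_star A B t b (u, v)) (t_star A B t b (u, v)) = -1" by (rule P2[OF uv])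
    show "minner (n (u, v)) (\<tau> (u, v) *\<^sub>R (B *\<^sub>R t (u, v) + A *\<^sub>R b (u, v))) = 0"
      using frame[OF uv] by (simp add: minner_simps minner_sym[of "n (u,v)" "t (u,v)"])
    show "\<exists>d. ((\<lambda>s. sigma_star A \<sigma> n (u, s)) has_vector_derivative d) (at v)
             \<and> minner (n (u, v)) d = 0" by (rule P3[OF uv])
  next
    show "\<exists>c. \<forall>p\<in>U. mnorm (\<sigma> p - sigma_star A \<sigma> n p) = c"
      by (rule exI[of _ "\<bar>A\<bar>"]) (simp add: mnorm_def sigma_star_def minner_simps frame
          real_sqrt_abs power2_eq_square[symmetric])
  next
    fix p assume p: "p \<in> U"
    show "minner (sigma_star A \<sigma> n p - \<sigma> p) (b p) = 0"
      using frame[OF p] by (simp add: sigma_star_def minner_simps)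
    show "minner (sigma_star A \<sigma> n p - \<sigma> p) (b_star A B t b p) = 0"
      using frame[OF p] by (simp add: sigma_star_def b_star_def minner_simps minner_sym[of "n p" "t p"])
  next
    show "\<exists>c. \<forall>p\<in>U. minner (b p) (b_star A B t b p) = c"
      by (rule exI[of _ "B / sqrt (B\<^sup>2 - A\<^sup>2)"])
        (simp add: frame b_star_def minner_simps minner_sym[of "b _" "t _"])
  next
    fix u v assume uv: "(u,v) \<in> U"
    show "((\<lambda>s. t_star A B t b (s, v)) has_vector_derivative
            (sqrt (B\<^sup>2 - A\<^sup>2) * \<tau> (u, v)) *\<^sub>R (kappa_star A B (\<kappa> (u, v)) (\<tau> (u, v)) *\<^sub>R n (u, v))) (at u)"
      using P4[OF uv] by blast
    show "((\<lambda>s. b_star A B t b (s, v)) has_vector_derivative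
            (sqrt (B\<^sup>2 - A\<^sup>2) * \<tau> (u, v)) *\<^sub>R (tau_star A B (\<kappa> (u, v)) (\<tau> (u, v)) *\<^sub>R n (u, v))) (at u)"
      using P4[OF uv] by blast
  qed
qed

end
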